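(* Let $\Gamma$ be a finite graph with vertex set $\{1,\dots,n\}$ and $c$ an acyclic orientation of $\Gamma$. For an equivalence class $u$ of $c$-admissible sequences, let $\phi(u)$ be the function on vertices with $\phi(u)_x$ equal to the number of occurrences of $x$ in any representative of $u$. Then the map $\phi$ from the set $\mathfrak{S}_c$ of equivalence classes of $c$-admissible sequences to integer-valued functions on the vertices is injective.
   Context: For an acyclic orientation $c$ of $\Gamma$ and a sink $x$ of $(\Gamma,c)$, $s_xcs_x$ denotes the orientation obtained by reversing all edges coming into $x$. A sequence $x_1,\dots,x_N$ of vertices is $c$-admissible if $x_1$ is a sink of $(\Gamma,c)$, $x_2$ is a sink of $(\Gamma, s_{x_1}cs_{x_1})$, $x_3$ is a sink of $(\Gamma, s_{x_2}s_{x_1}cs_{x_1}s_{x_2})$, and so on. Two admissible sequences are equivalent if one can be obtained from the other by repeatedly interchanging adjacent entries which are non-adjacent vertices of $\Gamma$ (this preserves admissibility and the number of occurrences of each vertex); $\mathfrak{S}_c$ is the set of equivalence classes. *)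

theory Defs
  imports Main
begin

definition simple_graph :: "nat \<Rightarrow> (nat \<times> nat) set \<Rightarrow> bool" where
  "simple_graph n E \<longleftrightarrow> E \<subseteq> {1..n} \<times> {1..n} \<and> sym E \<and> irrefl E"

text \<open>An orientation c is a set of arcs (x,y) meaning x \<rightarrow> y; it picks exactly one
  direction of each edge of E and has no directed cycles.\<close>
definition acyclic_orientation :: "(nat \<times> nat) set \<Rightarrow> (nat \<times> nat) set \<Rightarrow> bool" where
  "acyclic_orientation E c \<longleftrightarrow> c \<subseteq> E \<and> (\<forall>(x,y)\<in>E. ((x,y) \<in> c) \<noteq> ((y,x) \<in> c)) \<and> acyclic c"

definition is_sink :: "nat \<Rightarrow> (nat \<times> nat) set \<Rightarrow> nat \<Rightarrow> bool" where
  "is_sink n c x \<longleftrightarrow> x \<in> {1..n} \<and> (\<forall>y. (x,y) \<notin> c)"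

text \<open>s_x c s_x: reverse all arcs coming into x.\<close>
definition flip_at :: "(nat \<times> nat) set \<Rightarrow> nat \<Rightarrow> (nat \<times> nat) set" where
  "flip_at c x = {(a,b). (a,b) \<in> c \<and> b \<noteq> x} \<union> {(x,a) | a. (a,x) \<in> c}"

fun admissible :: "nat \<Rightarrow> (nat \<times> nat) set \<Rightarrow> nat list \<Rightarrow> bool" where
  "admissible n c [] = True"
| "admissible n c (x # xs) = (is_sink n c x \<and> admissible n (flip_at c x) xs)"

definition swap_step :: "(nat \<times> nat) set \<Rightarrow> nat list \<Rightarrow> nat list \<Rightarrow> bool" where
  "swap_step E u v \<longleftrightarrow> (\<exists>xs a b ys. u = xs @ [a, b] @ ys \<and> v = xs @ [b, a] @ ys \<and> (a, b) \<notin> E)"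

definition seq_equiv :: "(nat \<times> nat) set \<Rightarrow> (nat list \<times> nat list) set" where
  "seq_equiv E = {(u, v). (swap_step E)\<^sup>*\<^sup>* u v}"

definition S_c :: "nat \<Rightarrow> (nat \<times> nat) set \<Rightarrow> (nat \<times> nat) set \<Rightarrow> nat list set set" where
  "S_c n E c = {w. admissible n c w} // seq_equiv E"

definition phi :: "nat list set \<Rightarrow> (nat \<Rightarrow> int)" where
  "phi u = the_elem ((\<lambda>w x. int (count_list w x)) ` u)"

end

theory Submission
  imports Defs
begin

definition orinv :: "(nat \<times> nat) set \<Rightarrow> (nat \<times> nat) set \<Rightarrow> bool" where
  "orinv E c \<longleftrightarrow> c \<subseteq> E \<and> (\<forall>(x,y)\<in>E. ((x,y) \<in> c) \<noteq> ((y,x) \<in> c))"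

lemma flip_inv:
  assumes "sym E" "irrefl E" "orinv E c" "is_sink n c x"
  shows "orinv E (flip_at c x)"
  using assms unfolding orinv_def flip_at_def is_sink_def sym_def irrefl_def
  by (auto; blast)

lemma sink_stays:
  assumes "is_sink n c x" "y \<noteq> x"
  shows "is_sink n (flip_at c y) x"
  using assms unfolding is_sink_def flip_at_def by auto

lemma adm_append:
  "admissible n c (xs @ ys) = (admissible n c xs \<and> admissible n (foldl flip_at c xs) ys)"
  by (induction xs arbitrary: c) auto

lemma prefix_nonadj:
  assumes "sym E" "irrefl E" "orinv E c" "admissible n c p" "x \<notin> set p" "is_sink n c x"
  shows "\<forall>z\<in>set p. (z,x) \<notin> E"
  using assms
proof (induction p arbitrary: c)
  case Nil
  then show ?case by simp
next
  case (Cons z p)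
  have zs: "is_sink n c z" and ad: "admissible n (flip_at c z) p" using Cons.prems by auto
  have "(z,x) \<notin> E"
  proof
    assume e: "(z,x) \<in> E"
    have "(x,z) \<notin> c" using Cons.prems(6) unfolding is_sink_def by auto
    then have "(z,x) \<in> c" using e Cons.prems(3) unfolding orinv_def by auto
    then show False using zs unfolding is_sink_def by auto
  qed
  moreover have "\<forall>z\<in>set p. (z,x) \<notin> E"
    using Cons.IH[OF Cons.prems(1,2) flip_inv[OF Cons.prems(1,2,3) zs] ad]
      Cons.prems(5) sink_stays[OF Cons.prems(6)] by auto
  ultimately show ?case by simp
qed

lemma flip_comm:
  assumes "(a,b) \<notin> c" "(b,a) \<notin> c"
  shows "flip_at (flip_at c a) b = flip_at (flip_at c b) a"
  using assms unfolding flip_at_def by (cases "a = b") auto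

lemma swap_adm:
  assumes "orinv E c" "sym E" "irrefl E" "(a,b) \<notin> E" "admissible n c (xs @ [a,b] @ ys)"
  shows "admissible n c (xs @ [b,a] @ ys)"
  using assms
proof (induction xs arbitrary: c)
  case Nil
  show ?case
  proof (cases "a = b")
    case True then show ?thesis using Nil.prems by simp
  next
    case False
  have ab: "(a,b) \<notin> c" "(b,a) \<notin> c"
    using Nil.prems unfolding orinv_def sym_def irrefl_def by auto
  have s1: "is_sink n c a" and s2: "is_sink n (flip_at c a) b"
    and r: "admissible n (flip_at (flip_at c a) b) ys" using Nil.prems by auto
  have "is_sink n c b" using s2 ab False unfolding is_sink_def flip_at_def by auto
  moreover have "is_sink n (flip_at c b) a" using s1 ab False unfolding is_sink_def flip_at_def by auto
  ultimately show ?thesis using r flip_comm[OF ab] by simp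
  qed
next
  case (Cons z xs)
  then show ?case using flip_inv by auto
qed

abbreviation R where "R E \<equiv> (swap_step E)\<^sup>*\<^sup>*"

lemma R_cons: "R E u v \<Longrightarrow> R E (z#u) (z#v)"
proof (induction rule: rtranclp_induct)
  case base then show ?case by simp
next
  case (step y w)
  have "swap_step E (z#y) (z#w)"
    using step(2) unfolding swap_step_def by (metis append_Cons)
  then show ?case using step(3) by (meson rtranclp.rtrancl_into_rtrancl)
qed

lemma move_front:
  assumes "orinv E c" "sym E" "irrefl E" "\<forall>z\<in>set p. (z,x) \<notin> E"
    "admissible n c (p @ x # q)"
  shows "admissible n c (x # p @ q) \<and> R E (x # p @ q) (p @ x # q)"
  using assms
proof (induction p arbitrary: c)
  case Nil then show ?case by simp
next
  case (Cons z p)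
  have zs: "is_sink n c z" and ad: "admissible n (flip_at c z) (p @ x # q)" using Cons.prems by auto
  have IH: "admissible n (flip_at c z) (x # p @ q) \<and> R E (x # p @ q) (p @ x # q)"
    using Cons.IH[OF flip_inv[OF Cons.prems(2,3,1) zs] Cons.prems(2,3)] Cons.prems(4) ad by auto
  have xz: "(x,z) \<notin> E" using Cons.prems(4,2) unfolding sym_def by auto
  have a1: "admissible n c ([] @ [z,x] @ (p@q))" using zs IH by simp
  have "admissible n c ([] @ [x,z] @ (p@q))"
    using swap_adm[OF Cons.prems(1,2,3) _ a1] Cons.prems(4) by simp
  moreover have "swap_step E (x # z # p @ q) (z # x # p @ q)"
    unfolding swap_step_def using xz by (metis append_Cons append_Nil)
  moreover have "R E (z # x # p @ q) (z # p @ x # q)" using IH R_cons by auto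
  ultimately show ?case by (simp add: converse_rtranclp_into_rtranclp)
qed

lemma main:
  assumes "sym E" "irrefl E" "orinv E c" "admissible n c w" "admissible n c w'"
    "\<forall>x. count_list w x = count_list w' x"
  shows "R E w w'"
  using assms
proof (induction w arbitrary: c w')
  case Nil
  then have "w' = []" by (metis count_list_0_iff list.set_intros(1) neq_Nil_conv count_list.simps(1))
  then show ?case by simp
next
  case (Cons x w1)
  have xs: "is_sink n c x" and ad1: "admissible n (flip_at c x) w1" using Cons.prems by auto
  have "count_list w' x \<noteq> 0" using Cons.prems(6)[rule_format, of x] by simp
  then have "x \<in> set w'" using count_list_0_iff by metis
  then obtain p q where w': "w' = p @ x # q" and xp: "x \<notin> set p" by (metis split_list_first)
  have adp: "admissible n c p" using Cons.prems(5) w' adm_append by auto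
  have na: "\<forall>z\<in>set p. (z,x) \<notin> E" using prefix_nonadj[OF Cons.prems(1,2,3) adp xp xs] .
  have mf: "admissible n c (x # p @ q) \<and> R E (x # p @ q) (p @ x # q)"
    using move_front[OF Cons.prems(3,1,2) na] Cons.prems(5) w' by simp
  have cnt: "\<forall>y. count_list w1 y = count_list (p@q) y"
  proof
    fix y show "count_list w1 y = count_list (p@q) y"
      using Cons.prems(6)[rule_format, of y] w' by (auto split: if_splits)
  qed
  have "R E w1 (p @ q)"
    using Cons.IH[OF Cons.prems(1,2) flip_inv[OF Cons.prems(1,2,3) xs] ad1 _ cnt] mf by simp
  then have "R E (x # w1) (x # p @ q)" by (rule R_cons)
  then show ?case using mf w' by (meson rtranclp_trans)
qed

lemma swap_count: "swap_step E u v \<Longrightarrow> count_list u = count_list v"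
  unfolding swap_step_def by (auto simp: fun_eq_iff)

lemma R_count: "R E u v \<Longrightarrow> count_list u = count_list v"
  by (induction rule: rtranclp_induct) (auto dest: swap_count)

lemma phi_class:
  "phi (seq_equiv E `` {w}) = (\<lambda>x. int (count_list w x))"
proof -
  have "(\<lambda>w x. int (count_list w x)) ` (seq_equiv E `` {w}) = {(\<lambda>x. int (count_list w x))}"
  proof
    show "(\<lambda>w x. int (count_list w x)) ` (seq_equiv E `` {w}) \<subseteq> {(\<lambda>x. int (count_list w x))}"
      unfolding seq_equiv_def by (auto dest!: R_count)
    show "{(\<lambda>x. int (count_list w x))} \<subseteq> (\<lambda>w x. int (count_list w x)) ` (seq_equiv E `` {w})"
      unfolding seq_equiv_def by auto
  qed
  then show ?thesis unfolding phi_def by simp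
qed

theorem corollary6:
  assumes "simple_graph n E"
    and "acyclic_orientation E c"
  shows "inj_on phi (S_c n E c)"
proof (rule inj_onI)
  have sE: "sym E" and iE: "irrefl E" using assms(1) unfolding simple_graph_def by auto
  have oc: "orinv E c" using assms(2) unfolding acyclic_orientation_def orinv_def by auto
  fix U V assume U: "U \<in> S_c n E c" and V: "V \<in> S_c n E c" and e: "phi U = phi V"
  obtain w where w: "admissible n c w" and Uw: "U = seq_equiv E `` {w}"
    using U unfolding S_c_def by (auto elim!: quotientE)
  obtain w' where w': "admissible n c w'" and Vw: "V = seq_equiv E `` {w'}"
    using V unfolding S_c_def by (auto elim!: quotientE)
  have "(\<lambda>x. int (count_list w x)) = (\<lambda>x. int (count_list w' x))"
    using e Uw Vw phi_class by metis
  then have cnt: "\<forall>x. count_list w x = count_list w' x" by (metis of_nat_eq_iff)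
  have r1: "R E w w'" using main[OF sE iE oc w w' cnt] .
  have r2: "R E w' w" using main[OF sE iE oc w' w] cnt by simp
  show "U = V" unfolding Uw Vw seq_equiv_def
    using r1 r2 by (auto intro: rtranclp_trans)
qed

end
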